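(* Let $R=k[x_{ij}\mid1\le i\le n,1\le j\le m]$ over a field $k$, $n\le m$, and fix pairwise disjoint index sets $\sigma_1,\dots,\sigma_r\subseteq[m]$, each of size $n$. For each $j$ and $\ell\ge1$ let $q^j_\ell:D_\ell(G^* )\otimes\bigwedge^{n+\ell}F\to\bigwedge^\ell U_j$ be the map sending $g^{*(\alpha)}\otimes f_{\tau_1}\wedge\cdots\wedge f_{\tau_\ell}\wedge f_{\sigma_j}\mapsto(-1)^n\sum_{L\in\mathcal L_{\alpha,\tau}}e_{L_1}\wedge\cdots\wedge e_{L_\ell}$ for every $\tau=(\tau_1<\cdots<\tau_\ell)$ with $\tau\cap\sigma_j=\varnothing$ and $|\alpha|=\ell$, and sending all basis elements $g^{*(\alpha)}\otimes f_\rho$ with $\rho\not\supseteq\sigma_j$ to $0$. Then $$\operatorname{rank}_k\left(\begin{pmatrix}q^1_\ell\\ \vdots\\ q^r_\ell\end{pmatrix}\otimes k\right)=\binom{n+\ell-1}{\ell}\sum_{i=1}^r(-1)^{i+1}\binom{r}{i}\binom{m-in}{\ell-(i-1)n}.$$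
   Context: $F$ free with basis $f_1,\dots,f_m$, $G$ free with basis $g_1,\dots,g_n$, dual basis $g_i^*$; $D_\ell(G^* )$ the divided power with basis $g^{*(\alpha)}=g_1^{*(\alpha_1)}\cdots g_n^{*(\alpha_n)}$, $|\alpha|=\ell$; $f_\rho$ is the wedge of $f_s$, $s\in\rho$, in increasing order, and $f_{\sigma_j}=f_{\sigma_{j1}}\wedge\cdots\wedge f_{\sigma_{jn}}$. $U_j$ is free with basis $e_{is}$, $1\le i\le n$, $s\notin\sigma_j$, with $e_{(i,s)}=e_{is}$. For $\tau=(\tau_1<\dots<\tau_\ell)$ and $\alpha\in\mathbb Z^n_{\ge0}$, $\mathcal L_{\alpha,\tau}$ is the set of sets $L=\{(r_1,\tau_1),\dots,(r_\ell,\tau_\ell)\}$ with $r_s\in\{i:\alpha_i\ne0\}$ and $|\{s:r_s=j\}|=\alpha_j$ for all $j$, written $L=(L_1,\dots,L_\ell)$ with $L_s=(r_s,\tau_s)$. The stacked map goes to $\bigoplus_j\bigwedge^\ell U_j$. Convention: $\binom{a}{b}=0$ if $b>a$ or $b<0$. *)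

theory Defs
  imports Complex_Main "HOL-Library.Function_Algebras"
begin

definition binom_int :: "int \<Rightarrow> int \<Rightarrow> int" where
  "binom_int a b = (if 0 \<le> b \<and> b \<le> a then int (nat a choose nat b) else 0)"

definition multi_idx :: "nat \<Rightarrow> nat \<Rightarrow> (nat \<Rightarrow> nat) set" where
  "multi_idx n l = {\<alpha>. (\<forall>i. i \<notin> {1..n} \<longrightarrow> \<alpha> i = 0) \<and> (\<Sum>i\<in>{1..n}. \<alpha> i) = l}"

definition Lset :: "(nat \<Rightarrow> nat) \<Rightarrow> nat set \<Rightarrow> (nat \<times> nat) set set" where
  "Lset \<alpha> \<tau> = {L. \<exists>r::nat \<Rightarrow> nat. L = (\<lambda>s. (r s, s)) ` \<tau> \<and>
      (\<forall>s\<in>\<tau>. \<alpha> (r s) \<noteq> 0) \<and> (\<forall>j. card {s\<in>\<tau>. r s = j} = \<alpha> j)}"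

text \<open>Sign relating f_tau wedge f_sigma to f_(tau union sigma) (increasing order):
  number of inversions.\<close>
definition wedge_sign :: "nat set \<Rightarrow> nat set \<Rightarrow> nat" where
  "wedge_sign \<tau> \<sigma> = card {(a, b). a \<in> \<tau> \<and> b \<in> \<sigma> \<and> b < a}"

text \<open>Row index set of the stacked map: (j, S) with S an l-subset of the basis
  {e_is : 1<=i<=n, s in [m] - sigma_j} of U_j; S stands for the wedge of its elements
  ordered by the second coordinate s (then by i).\<close>
definition row_idx :: "nat \<Rightarrow> nat \<Rightarrow> nat \<Rightarrow> (nat \<Rightarrow> nat set) \<Rightarrow> nat \<Rightarrow> (nat \<times> (nat \<times> nat) set) set" where
  "row_idx n m r \<sigma> l = {(j, S). j \<in> {1..r} \<and>
      S \<subseteq> {(i, s). i \<in> {1..n} \<and> s \<in> {1..m} \<and> s \<notin> \<sigma> j} \<and> card S = l}"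

text \<open>Column of the stacked matrix (q^1_l; ...; q^r_l) tensor k at the basis element
  g^{*(alpha)} tensor f_rho, as a k-valued function on row indices.\<close>
definition q_col :: "nat \<Rightarrow> nat \<Rightarrow> nat \<Rightarrow> (nat \<Rightarrow> nat set) \<Rightarrow> nat \<Rightarrow>
    (nat \<Rightarrow> nat) \<Rightarrow> nat set \<Rightarrow> nat \<times> (nat \<times> nat) set \<Rightarrow> 'k::field" where
  "q_col n m r \<sigma> l \<alpha> \<rho> = (\<lambda>(j, S).
     if (j, S) \<in> row_idx n m r \<sigma> l \<and> \<sigma> j \<subseteq> \<rho> \<and> S \<in> Lset \<alpha> (\<rho> - \<sigma> j)
     then (-1) ^ n * (-1) ^ wedge_sign (\<rho> - \<sigma> j) (\<sigma> j) else 0)"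

definition q_cols :: "nat \<Rightarrow> nat \<Rightarrow> nat \<Rightarrow> (nat \<Rightarrow> nat set) \<Rightarrow> nat \<Rightarrow>
    (nat \<times> (nat \<times> nat) set \<Rightarrow> 'k::field) set" where
  "q_cols n m r \<sigma> l = {q_col n m r \<sigma> l \<alpha> \<rho> | \<alpha> \<rho>.
      \<alpha> \<in> multi_idx n l \<and> \<rho> \<subseteq> {1..m} \<and> card \<rho> = n + l}"

definition q_rank :: "'k::field itself \<Rightarrow> nat \<Rightarrow> nat \<Rightarrow> nat \<Rightarrow> (nat \<Rightarrow> nat set) \<Rightarrow> nat \<Rightarrow> nat" where
  "q_rank _ n m r \<sigma> l =
     vector_space.dim (\<lambda>(c::'k) f x. c * f x) (q_cols n m r \<sigma> l :: (_ \<Rightarrow> 'k) set)"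

end

theory Submission
  imports Defs
begin

lemma binom_int_nat: "binom_int (int a) (int b) = int (a choose b)"
  by (auto simp: binom_int_def binomial_eq_0)

lemma sum_fun_apply: "(\<Sum>x\<in>A. F x) y = (\<Sum>x\<in>A. (F x :: 'a \<Rightarrow> 'b::comm_monoid_add) y)"
  apply (cases "finite A")
   apply (induct A rule: finite_induct)
    apply (auto simp: plus_fun_def zero_fun_def)
  done

lemma vs_fun: "vector_space (\<lambda>(c::'k::field) (f::'a\<Rightarrow>'k) x. c * f x)"
  by unfold_locales (auto simp: fun_eq_iff algebra_simps plus_fun_def)

lemma exists_fibers:
  fixes n :: nat and \<alpha> :: "nat \<Rightarrow> nat" and \<tau> :: "'a set"
  shows "finite \<tau> \<Longrightarrow> card \<tau> = (\<Sum>i\<in>{1..n}. \<alpha> i) \<Longrightarrow>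
    \<exists>rr. (\<forall>s\<in>\<tau>. rr s \<in> {1..n}) \<and> (\<forall>j\<in>{1..n}. card {s\<in>\<tau>. rr s = j} = (\<alpha> j::nat))"
proof (induction n arbitrary: \<tau>)
  case 0
  then have "\<tau> = {}" by simp
  then show ?case by simp
next
  case (Suc n)
  have sS: "(\<Sum>i\<in>{1..Suc n}. \<alpha> i) = (\<Sum>i\<in>{1..n}. \<alpha> i) + \<alpha> (Suc n)"
    by simp
  then have "\<alpha> (Suc n) \<le> card \<tau>" using Suc.prems by simp
  then obtain A where A: "A \<subseteq> \<tau>" "card A = \<alpha> (Suc n)"
    by (meson obtain_subset_with_card_n)
  have fA: "finite A" using A Suc.prems finite_subset by blast
  have "card (\<tau> - A) = (\<Sum>i\<in>{1..n}. \<alpha> i)"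
    using A Suc.prems sS by (simp add: card_Diff_subset fA)
  then obtain r' where r': "\<forall>s\<in>\<tau> - A. r' s \<in> {1..n}"
      "\<forall>j\<in>{1..n}. card {s\<in>\<tau> - A. r' s = j} = \<alpha> j"
    using Suc.IH[of "\<tau> - A"] Suc.prems by auto
  define rr where "rr s = (if s \<in> A then Suc n else r' s)" for s
  have r'': "r' s \<in> {1..n}" if "s\<in>\<tau>" "s\<notin>A" for s using r' that by blast
  have 1: "\<forall>s\<in>\<tau>. rr s \<in> {1..Suc n}"
  proof
    fix s assume s: "s \<in> \<tau>"
    show "rr s \<in> {1..Suc n}"
    proof (cases "s \<in> A")
      case True then show ?thesis by (simp add: rr_def)
    next
      case False
      then have "r' s \<in> {1..n}" using r'' s by blast
      then show ?thesis using False by (simp add: rr_def)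
    qed
  qed
  have 2: "card {s\<in>\<tau>. rr s = j} = \<alpha> j" if "j \<in> {1..Suc n}" for j
  proof (cases "j = Suc n")
    case True
    have "{s\<in>\<tau>. rr s = j} = A"
    proof (rule set_eqI)
      fix s
      show "s \<in> {s\<in>\<tau>. rr s = j} \<longleftrightarrow> s \<in> A"
      proof (cases "s \<in> A")
        case True
        then show ?thesis using A \<open>j = Suc n\<close> by (auto simp: rr_def)
      next
        case F: False
        show ?thesis
        proof (cases "s \<in> \<tau>")
          case True
          with F have "r' s \<in> {1..n}" using r'' by blast
          then show ?thesis using F \<open>j = Suc n\<close> by (simp add: rr_def)
        next
          case False then show ?thesis using F by simp
        qed
      qed
    qed
    then show ?thesis using A True by simp
  next
    case False
    then have "{s\<in>\<tau>. rr s = j} = {s\<in>\<tau> - A. r' s = j}" by (auto simp: rr_def)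
    then show ?thesis using r' that False by auto
  qed
  show ?case using 1 2 by blast
qed

lemma Lset_props:
  assumes "S \<in> Lset \<alpha> \<tau>" "finite \<tau>"
  shows "snd ` S = \<tau>" "\<alpha> j = card {p\<in>S. fst p = j}"
proof -
  from assms obtain rr where S: "S = (\<lambda>s. (rr s, s)) ` \<tau>" and c: "\<forall>j. card {s\<in>\<tau>. rr s = j} = \<alpha> j"
    unfolding Lset_def by blast
  show "snd ` S = \<tau>" by (simp add: S image_image)
  have "{p\<in>S. fst p = j} = (\<lambda>s. (rr s, s)) ` {s\<in>\<tau>. rr s = j}" by (auto simp: S)
  moreover have "inj_on (\<lambda>s. (rr s, s)) {s\<in>\<tau>. rr s = j}" by (auto simp: inj_on_def)
  moreover have "card ((\<lambda>s. (rr s, s)) ` {s\<in>\<tau>. rr s = j}) = card {s\<in>\<tau>. rr s = j}"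
    by (rule card_image) fact
  ultimately show "\<alpha> j = card {p\<in>S. fst p = j}" using c by simp
qed

lemma qcol_nz_unique:
  assumes "q_col n m r \<sigma> l \<alpha> \<rho> x \<noteq> (0::'k::field)" "q_col n m r \<sigma> l \<alpha>' \<rho>' x \<noteq> (0::'k)"
    "finite \<rho>" "finite \<rho>'"
  shows "\<alpha> = \<alpha>' \<and> \<rho> = \<rho>'"
proof -
  obtain j S where x: "x = (j, S)" by (cases x)
  have h1: "\<sigma> j \<subseteq> \<rho> \<and> S \<in> Lset \<alpha> (\<rho> - \<sigma> j)"
    using assms(1) unfolding x q_col_def by (simp split: if_splits)
  have h2: "\<sigma> j \<subseteq> \<rho>' \<and> S \<in> Lset \<alpha>' (\<rho>' - \<sigma> j)"
    using assms(2) unfolding x q_col_def by (simp split: if_splits)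
  have f1: "finite (\<rho> - \<sigma> j)" using assms(3) by simp
  have f2: "finite (\<rho>' - \<sigma> j)" using assms(4) by simp
  have "\<rho> - \<sigma> j = \<rho>' - \<sigma> j"
    using Lset_props(1)[OF conjunct2[OF h1] f1] Lset_props(1)[OF conjunct2[OF h2] f2] by simp
  then have "\<rho> = \<rho>'" using h1 h2 by blast
  moreover have "\<alpha> = \<alpha>'"
  proof (rule ext)
    fix i
    show "\<alpha> i = \<alpha>' i"
      using Lset_props(2)[OF conjunct2[OF h1] f1, of i] Lset_props(2)[OF conjunct2[OF h2] f2, of i]
      by simp
  qed
  ultimately show ?thesis by simp
qed

lemma qcol_nz_iff:
  assumes "\<alpha> \<in> multi_idx n l" "\<rho> \<subseteq> {1..m}" "card \<rho> = n + l"
    and "\<forall>j\<in>{1..r}. \<sigma> j \<subseteq> {1..m} \<and> card (\<sigma> j) = n"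
  shows "(q_col n m r \<sigma> l \<alpha> \<rho> \<noteq> (0::_ \<Rightarrow> 'k::field)) \<longleftrightarrow> (\<exists>j\<in>{1..r}. \<sigma> j \<subseteq> \<rho>)"
proof
  assume "q_col n m r \<sigma> l \<alpha> \<rho> \<noteq> (0::_ \<Rightarrow> 'k::field)"
  then obtain x where x0: "q_col n m r \<sigma> l \<alpha> \<rho> x \<noteq> (0::'k)" by (auto simp: fun_eq_iff)
  obtain j S where x: "x = (j, S)" by (cases x)
  have "(j, S) \<in> row_idx n m r \<sigma> l \<and> \<sigma> j \<subseteq> \<rho>"
    using x0 unfolding x q_col_def by (simp split: if_splits)
  then have "j \<in> {1..r} \<and> \<sigma> j \<subseteq> \<rho>" by (simp add: row_idx_def)
  then show "\<exists>j\<in>{1..r}. \<sigma> j \<subseteq> \<rho>" by blast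
next
  assume "\<exists>j\<in>{1..r}. \<sigma> j \<subseteq> \<rho>"
  then obtain j where j: "j \<in> {1..r}" "\<sigma> j \<subseteq> \<rho>" by blast
  define \<tau> where "\<tau> = \<rho> - \<sigma> j"
  have fr: "finite \<rho>" using assms(2) finite_subset by blast
  have fs: "finite (\<sigma> j)" using j fr finite_subset by blast
  have csj: "card (\<sigma> j) = n" using assms(4) j by blast
  have ct: "card \<tau> = l" using assms(3) j csj by (simp add: \<tau>_def card_Diff_subset fs)
  have ft: "finite \<tau>" using fr by (simp add: \<tau>_def)
  have sa: "(\<Sum>i\<in>{1..n}. \<alpha> i) = l" and a0: "\<forall>i. i \<notin> {1..n} \<longrightarrow> \<alpha> i = 0"
    using assms(1) by (auto simp: multi_idx_def)
  have "\<exists>rr. (\<forall>s\<in>\<tau>. rr s \<in> {1..n}) \<and> (\<forall>j\<in>{1..n}. card {s\<in>\<tau>. rr s = j} = \<alpha> j)"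
    by (rule exists_fibers[OF ft]) (use ct sa in simp)
  then obtain rr where rr: "\<forall>s\<in>\<tau>. rr s \<in> {1..n}" "\<forall>j\<in>{1..n}. card {s\<in>\<tau>. rr s = j} = \<alpha> j"
    by blast
  define S where "S = (\<lambda>s. (rr s, s)) ` \<tau>"
  have call: "card {s\<in>\<tau>. rr s = i} = \<alpha> i" for i
  proof (cases "i \<in> {1..n}")
    case True then show ?thesis using rr by blast
  next
    case False
    then have e: "{s\<in>\<tau>. rr s = i} = {}" using rr by blast
    have "card {s\<in>\<tau>. rr s = i} = 0" unfolding e by simp
    then show ?thesis using False a0 by simp
  qed
  have nz: "\<alpha> (rr s) \<noteq> 0" if "s \<in> \<tau>" for s
  proof -
    have "s \<in> {s'\<in>\<tau>. rr s' = rr s}" using that by simp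
    moreover have "finite {s'\<in>\<tau>. rr s' = rr s}" using ft by simp
    ultimately have "0 < card {s'\<in>\<tau>. rr s' = rr s}" by (auto simp: card_gt_0_iff)
    then show ?thesis using call[of "rr s"] by simp
  qed
  have SL: "S \<in> Lset \<alpha> \<tau>" unfolding Lset_def S_def using nz call by blast
  have cS: "card S = l" unfolding S_def using ct by (simp add: card_image inj_on_def)
  have Ssub: "S \<subseteq> {(i, s). i \<in> {1..n} \<and> s \<in> {1..m} \<and> s \<notin> \<sigma> j}"
  proof
    fix p assume "p \<in> S"
    then obtain s where s: "s \<in> \<tau>" "p = (rr s, s)" unfolding S_def by blast
    have "rr s \<in> {1..n}" using rr s by blast
    moreover have "s \<in> {1..m}" "s \<notin> \<sigma> j" using s assms(2) unfolding \<tau>_def by auto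
    ultimately show "p \<in> {(i, s). i \<in> {1..n} \<and> s \<in> {1..m} \<and> s \<notin> \<sigma> j}" using s by simp
  qed
  have "(j, S) \<in> row_idx n m r \<sigma> l"
    unfolding row_idx_def using j cS Ssub by simp
  then have "(q_col n m r \<sigma> l \<alpha> \<rho> (j, S) :: 'k) = (-1) ^ n * (-1) ^ wedge_sign (\<rho> - \<sigma> j) (\<sigma> j)"
    using SL j by (simp add: q_col_def \<tau>_def)
  then have "q_col n m r \<sigma> l \<alpha> \<rho> (j, S) \<noteq> (0::'k)" by simp
  then show "q_col n m r \<sigma> l \<alpha> \<rho> \<noteq> (0::_ \<Rightarrow> 'k::field)" by (auto simp: fun_eq_iff)
qed


lemma multi_idx_bij:
  "bij_betw (\<lambda>\<alpha>. map \<alpha> [1..<Suc n]) (multi_idx n l) {xs. length xs = n \<and> sum_list xs = l}"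
proof -
  define f' where "f' xs = (\<lambda>i. if i \<in> {1..n} then xs ! (i - 1) else (0::nat))" for xs :: "nat list"
  have sl: "sum_list (map \<alpha> [1..<Suc n]) = (\<Sum>i\<in>{1..n}. \<alpha> i)" for \<alpha> :: "nat \<Rightarrow> nat"
  proof -
    have "sum_list (map \<alpha> [1..<Suc n]) = sum \<alpha> (set [1..<Suc n])"
      by (rule sum.distinct_set_conv_list[symmetric]) simp
    also have "set [1..<Suc n] = {1..n}" by auto
    finally show ?thesis .
  qed
  have fw: "f' (map \<alpha> [1..<Suc n]) = \<alpha>" if "\<alpha> \<in> multi_idx n l" for \<alpha>
  proof (rule ext)
    fix i
    show "f' (map \<alpha> [1..<Suc n]) i = \<alpha> i"
    proof (cases "i \<in> {1..n}")
      case True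
      then have "i - 1 < n" by auto
      then show ?thesis using True by (simp add: f'_def nth_map del: upt_Suc)
    next
      case False
      then have "f' (map \<alpha> [1..<Suc n]) i = 0" unfolding f'_def by (simp only: if_False)
      then show ?thesis using that False by (simp add: multi_idx_def)
    qed
  qed
  have bw: "map (f' xs) [1..<Suc n] = xs" if "length xs = n" for xs
  proof (rule nth_equalityI)
    show "length (map (f' xs) [1..<Suc n]) = length xs" using that by (simp del: upt_Suc)
    fix k assume "k < length (map (f' xs) [1..<Suc n])"
    then have "k < n" by (simp del: upt_Suc)
    then show "map (f' xs) [1..<Suc n] ! k = xs ! k" by (simp add: f'_def del: upt_Suc)
  qed
  show ?thesis
  proof (rule bij_betw_byWitness[where f'=f'])
    show "\<forall>a\<in>multi_idx n l. f' (map a [1..<Suc n]) = a" using fw by blast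
    show "\<forall>a'\<in>{xs. length xs = n \<and> sum_list xs = l}. map (f' a') [1..<Suc n] = a'" using bw by blast
    show "(\<lambda>\<alpha>. map \<alpha> [1..<Suc n]) ` multi_idx n l \<subseteq> {xs. length xs = n \<and> sum_list xs = l}"
      using sl by (auto simp: multi_idx_def)
    show "f' ` {xs. length xs = n \<and> sum_list xs = l} \<subseteq> multi_idx n l"
    proof
      fix \<alpha> assume "\<alpha> \<in> f' ` {xs. length xs = n \<and> sum_list xs = l}"
      then obtain xs where xs: "length xs = n" "sum_list xs = l" "\<alpha> = f' xs" by blast
      have "(\<Sum>i\<in>{1..n}. \<alpha> i) = l" using sl[of \<alpha>] bw[OF xs(1)] xs by simp
      moreover have "\<forall>i. i \<notin> {1..n} \<longrightarrow> \<alpha> i = 0" using xs by (simp add: f'_def)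
      ultimately show "\<alpha> \<in> multi_idx n l" by (simp add: multi_idx_def)
    qed
  qed
qed

lemma finite_lists_sum: "finite {xs. length xs = n \<and> sum_list xs = (l::nat)}"
proof (rule finite_subset)
  show "{xs. length xs = n \<and> sum_list xs = l} \<subseteq> {xs. set xs \<subseteq> {0..l} \<and> length xs = n}"
    using member_le_sum_list by fastforce
  show "finite {xs. set xs \<subseteq> {0..l::nat} \<and> length xs = n}" by (rule finite_lists_length_eq) simp
qed

lemma multi_idx_card: "card (multi_idx n l) = (l + n - 1) choose l" and multi_idx_finite: "finite (multi_idx n l)"
  using bij_betw_same_card[OF multi_idx_bij] card_length_sum_list bij_betw_finite[OF multi_idx_bij] finite_lists_sum
  by auto

lemma superset_card:
  assumes "finite M0" "U \<subseteq> M0"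
  shows "card {\<rho>. \<rho> \<subseteq> M0 \<and> card \<rho> = c \<and> U \<subseteq> \<rho>} =
    (if card U \<le> c then (card M0 - card U) choose (c - card U) else 0)"
proof (cases "card U \<le> c")
  case False
  have e: "{\<rho>. \<rho> \<subseteq> M0 \<and> card \<rho> = c \<and> U \<subseteq> \<rho>} = {}"
  proof (rule ccontr)
    assume "{\<rho>. \<rho> \<subseteq> M0 \<and> card \<rho> = c \<and> U \<subseteq> \<rho>} \<noteq> {}"
    then obtain \<rho> where "\<rho> \<subseteq> M0" "card \<rho> = c" "U \<subseteq> \<rho>" by blast
    then have "card U \<le> c" using assms card_mono finite_subset by metis
    then show False using False by simp
  qed
  show ?thesis unfolding e using False by simp
next
  case True
  have fU: "finite U" using assms finite_subset by blast
  have "bij_betw (\<lambda>\<rho>. \<rho> - U) {\<rho>. \<rho> \<subseteq> M0 \<and> card \<rho> = c \<and> U \<subseteq> \<rho>} {B. B \<subseteq> M0 - U \<and> card B = c - card U}"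
  proof (rule bij_betw_byWitness[where f'="\<lambda>B. B \<union> U"])
    show "\<forall>a\<in>{\<rho>. \<rho> \<subseteq> M0 \<and> card \<rho> = c \<and> U \<subseteq> \<rho>}. a - U \<union> U = a" by blast
    show "\<forall>a'\<in>{B. B \<subseteq> M0 - U \<and> card B = c - card U}. a' \<union> U - U = a'" by blast
    show "(\<lambda>\<rho>. \<rho> - U) ` {\<rho>. \<rho> \<subseteq> M0 \<and> card \<rho> = c \<and> U \<subseteq> \<rho>} \<subseteq> {B. B \<subseteq> M0 - U \<and> card B = c - card U}"
    proof
      fix B assume "B \<in> (\<lambda>\<rho>. \<rho> - U) ` {\<rho>. \<rho> \<subseteq> M0 \<and> card \<rho> = c \<and> U \<subseteq> \<rho>}"
      then obtain \<rho> where r: "\<rho> \<subseteq> M0" "card \<rho> = c" "U \<subseteq> \<rho>" "B = \<rho> - U" by blast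
      have "card (\<rho> - U) = card \<rho> - card U" using r fU by (simp add: card_Diff_subset)
      then show "B \<in> {B. B \<subseteq> M0 - U \<and> card B = c - card U}" using r by auto
    qed
    show "(\<lambda>B. B \<union> U) ` {B. B \<subseteq> M0 - U \<and> card B = c - card U} \<subseteq> {\<rho>. \<rho> \<subseteq> M0 \<and> card \<rho> = c \<and> U \<subseteq> \<rho>}"
    proof
      fix \<rho> assume "\<rho> \<in> (\<lambda>B. B \<union> U) ` {B. B \<subseteq> M0 - U \<and> card B = c - card U}"
      then obtain B where b: "B \<subseteq> M0 - U" "card B = c - card U" "\<rho> = B \<union> U" by blast
      have fB: "finite B" using b assms(1) finite_subset by blast
      have "card (B \<union> U) = card B + card U" using b fB fU by (intro card_Un_disjoint) auto
      then show "\<rho> \<in> {\<rho>. \<rho> \<subseteq> M0 \<and> card \<rho> = c \<and> U \<subseteq> \<rho>}" using b True assms by auto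
    qed
  qed
  then have "card {\<rho>. \<rho> \<subseteq> M0 \<and> card \<rho> = c \<and> U \<subseteq> \<rho>} = card {B. B \<subseteq> M0 - U \<and> card B = c - card U}"
    by (rule bij_betw_same_card)
  also have "\<dots> = card (M0 - U) choose (c - card U)" using assms by (simp add: n_subsets)
  also have "card (M0 - U) = card M0 - card U" using assms fU by (simp add: card_Diff_subset)
  finally show ?thesis using True by simp
qed

lemma int_card_UN_idx:
  assumes "finite A" "\<And>a. a \<in> A \<Longrightarrow> finite (X a)"
  shows "int (card (\<Union>(X ` A))) = (\<Sum>B | B \<subseteq> A \<and> B \<noteq> {}. (- 1) ^ (card B + 1) * int (card (\<Inter> (X ` B))))"
proof -
  interpret Incl_Excl finite "int o card"
    by unfold_locales (auto simp add: card_Un_disjnt)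
  show ?thesis using restricted_indexed[OF assms] by simp
qed


lemma binom_conv:
  assumes "1 \<le> k" "k * n \<le> m"
  shows "int (if k * n \<le> n + l then (m - k * n) choose (n + l - k * n) else 0) =
    binom_int (int m - int k * int n) (int l - (int k - 1) * int n)"
proof (cases "k * n \<le> n + l")
  case True
  have e1: "int m - int k * int n = int (m - k * n)" using assms by (simp add: of_nat_diff)
  have e2: "int l - (int k - 1) * int n = int (n + l - k * n)"
    using True by (simp add: of_nat_diff algebra_simps)
  show ?thesis using True unfolding e1 e2 binom_int_nat by simp
next
  case False
  then have "int l - (int k - 1) * int n < 0"
  proof -
    have "n + l < k * n" using False by simp
    then have "int n + int l < int k * int n" by (metis of_nat_less_iff of_nat_add of_nat_mult)
    then show ?thesis by (simp add: algebra_simps)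
  qed
  then show ?thesis using False by (simp add: binom_int_def)
qed

lemma regroup:
  fixes h :: "nat \<Rightarrow> int"
  shows "(\<Sum>B | B \<subseteq> {1..r} \<and> B \<noteq> {}. h (card B)) = (\<Sum>i=1..r. int (r choose i) * h i)"
proof -
  let ?S = "{B. B \<subseteq> {1..r::nat} \<and> B \<noteq> {}}"
  have fS: "finite ?S" by simp
  have im: "card ` ?S \<subseteq> {1..r}"
  proof
    fix k assume "k \<in> card ` ?S"
    then obtain B where B: "B \<subseteq> {1..r}" "B \<noteq> {}" "k = card B" by blast
    have "finite B" using B finite_subset by blast
    then have "1 \<le> card B" using B by (simp add: Suc_leI card_gt_0_iff)
    moreover have "card B \<le> r" using B card_mono[of "{1..r}" B] by simp
    ultimately show "k \<in> {1..r}" using B by simp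
  qed
  have "(\<Sum>B\<in>?S. h (card B)) = (\<Sum>i\<in>{1..r}. \<Sum>B\<in>{B\<in>?S. card B = i}. h (card B))"
    by (rule sum.group[OF fS _ im, symmetric]) simp
  also have "\<dots> = (\<Sum>i=1..r. int (r choose i) * h i)"
  proof (rule sum.cong[OF refl])
    fix i assume i: "i \<in> {1..r}"
    have e: "{B\<in>?S. card B = i} = {B. B \<subseteq> {1..r} \<and> card B = i}" using i by auto
    have "(\<Sum>B\<in>{B\<in>?S. card B = i}. h (card B)) = (\<Sum>B\<in>{B\<in>?S. card B = i}. h i)"
      by (rule sum.cong) auto
    also have "\<dots> = int (card {B. B \<subseteq> {1..r} \<and> card B = i}) * h i" unfolding e by simp
    also have "card {B. B \<subseteq> {1..r} \<and> card B = i} = r choose i" using n_subsets[of "{1..r}" i] by simp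
    finally show "(\<Sum>B\<in>{B\<in>?S. card B = i}. h (card B)) = int (r choose i) * h i" .
  qed
  finally show ?thesis by simp
qed

theorem lemma5p5:
  fixes n m r l :: nat and \<sigma> :: "nat \<Rightarrow> nat set"
  assumes "n \<le> m"
    and "\<forall>j\<in>{1..r}. \<sigma> j \<subseteq> {1..m} \<and> card (\<sigma> j) = n"
    and "\<forall>i\<in>{1..r}. \<forall>j\<in>{1..r}. i \<noteq> j \<longrightarrow> \<sigma> i \<inter> \<sigma> j = {}"
    and "l \<ge> 1"
  shows "int (q_rank TYPE('k::field) n m r \<sigma> l) =
     binom_int (int (n + l - 1)) (int l) *
     (\<Sum>i=1..r. (-1) ^ (i + 1) * int (r choose i) *
        binom_int (int m - int i * int n) (int l - (int i - 1) * int n))"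
proof -
  interpret V: vector_space "\<lambda>(c::'k) (f::nat \<times> (nat \<times> nat) set \<Rightarrow> 'k) x. c * f x"
    by (rule vs_fun)
  define q where "q = (\<lambda>(\<alpha>, \<rho>). (q_col n m r \<sigma> l \<alpha> \<rho> :: nat \<times> (nat \<times> nat) set \<Rightarrow> 'k))"
  define M where "M = multi_idx n l"
  define R where "R = {\<rho>. \<rho> \<subseteq> {1..m} \<and> card \<rho> = n + l}"
  define X where "X j = {\<rho> \<in> R. \<sigma> j \<subseteq> \<rho>}" for j
  define N where "N = \<Union>(X ` {1..r})"
  define C where "C = (q_cols n m r \<sigma> l :: (nat \<times> (nat \<times> nat) set \<Rightarrow> 'k) set)"
  have C_eq: "C = q ` (M \<times> R)"
    unfolding C_def q_cols_def q_def M_def R_def by auto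
  have finR: "finite R"
    by (rule finite_subset[of _ "Pow {1..m}"]) (auto simp: R_def)
  have finM: "finite M" unfolding M_def by (rule multi_idx_finite)
  have N_iff: "\<rho> \<in> N \<longleftrightarrow> \<rho> \<in> R \<and> (\<exists>j\<in>{1..r}. \<sigma> j \<subseteq> \<rho>)" for \<rho>
    unfolding N_def X_def by blast
  have finN: "finite N" using finR N_iff by (metis finite_subset subsetI)
  have nz_iff: "q (\<alpha>, \<rho>) \<noteq> 0 \<longleftrightarrow> \<rho> \<in> N" if "\<alpha> \<in> M" "\<rho> \<in> R" for \<alpha> \<rho>
    using qcol_nz_iff[of \<alpha> n l \<rho> m r \<sigma>] that assms(2) N_iff unfolding q_def M_def R_def by auto
  have C0: "C - {0} = q ` (M \<times> N)"
  proof
    show "C - {0} \<subseteq> q ` (M \<times> N)"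
    proof
      fix v assume "v \<in> C - {0}"
      then obtain \<alpha> \<rho> where "\<alpha> \<in> M" "\<rho> \<in> R" "v = q (\<alpha>, \<rho>)" "v \<noteq> 0" unfolding C_eq by auto
      then show "v \<in> q ` (M \<times> N)" using nz_iff by auto
    qed
    show "q ` (M \<times> N) \<subseteq> C - {0}"
    proof
      fix v assume "v \<in> q ` (M \<times> N)"
      then obtain \<alpha> \<rho> where "\<alpha> \<in> M" "\<rho> \<in> N" "v = q (\<alpha>, \<rho>)" by auto
      moreover then have "\<rho> \<in> R" using N_iff by blast
      ultimately show "v \<in> C - {0}" using nz_iff unfolding C_eq by auto
    qed
  qed
  have nzMN: "q b \<noteq> 0" if "b \<in> M \<times> N" for b
  proof -
    obtain \<alpha> \<rho> where b: "b = (\<alpha>, \<rho>)" by (cases b)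
    then have "\<alpha> \<in> M" "\<rho> \<in> N" using that by auto
    moreover then have "\<rho> \<in> R" using N_iff by blast
    ultimately show ?thesis using nz_iff[of \<alpha> \<rho>] b by simp
  qed
  have finR': "finite \<rho>" if "\<rho> \<in> N" for \<rho>
  proof -
    have "\<rho> \<subseteq> {1..m}" using that N_iff unfolding R_def by blast
    then show ?thesis by (rule finite_subset) simp
  qed
  have uniq: "a = b" if "a \<in> M \<times> N" "b \<in> M \<times> N" "q a y \<noteq> 0" "q b y \<noteq> 0" for a b y
  proof -
    obtain \<alpha> \<rho> where ab1: "a = (\<alpha>, \<rho>)" by (cases a)
    obtain \<alpha>' \<rho>' where ab2: "b = (\<alpha>', \<rho>')" by (cases b)
    note ab = ab1 ab2
    have "\<alpha> = \<alpha>' \<and> \<rho> = \<rho>'"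
      by (rule qcol_nz_unique[where x=y]) (use that ab finR' in \<open>auto simp: q_def\<close>)
    then show ?thesis using ab by simp
  qed
  have inj: "inj_on q (M \<times> N)"
  proof (rule inj_onI)
    fix a b assume ab: "a \<in> M \<times> N" "b \<in> M \<times> N" "q a = q b"
    have "q a \<noteq> 0" using ab(1) by (rule nzMN)
    then obtain y where "q a y \<noteq> 0" by (auto simp: fun_eq_iff)
    then show "a = b" using uniq[OF ab(1,2)] ab(3) by metis
  qed
  have indep: "V.independent (q ` (M \<times> N))"
  proof (rule V.independent_if_scalars_zero)
    show "finite (q ` (M \<times> N))" using finM finN by simp
    fix u v
    assume sum0: "(\<Sum>x\<in>q ` (M \<times> N). (\<lambda>z. u x * x z)) = 0" and v: "v \<in> q ` (M \<times> N)"
    obtain a where a: "a \<in> M \<times> N" "v = q a" using v by blast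
    have "q a \<noteq> 0" using a(1) by (rule nzMN)
    then obtain y where y: "v y \<noteq> 0" using a by (auto simp: fun_eq_iff)
    have "(\<Sum>x\<in>q ` (M \<times> N). (\<lambda>z. u x * x z)) y = 0" using sum0 by simp
    then have s0: "(\<Sum>x\<in>q ` (M \<times> N). u x * x y) = 0" by (simp add: sum_fun_apply)
    have "(\<Sum>x\<in>q ` (M \<times> N). u x * x y) = u v * v y + (\<Sum>x\<in>q ` (M \<times> N) - {v}. u x * x y)"
      using v finM finN by (simp add: sum.remove)
    also have "(\<Sum>x\<in>q ` (M \<times> N) - {v}. u x * x y) = 0"
    proof (rule sum.neutral, rule ballI)
      fix x assume x: "x \<in> q ` (M \<times> N) - {v}"
      then obtain b where b: "b \<in> M \<times> N" "x = q b" by blast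
      have "x y = 0"
      proof (rule ccontr)
        assume "x y \<noteq> 0"
        then have "b = a" using uniq[OF b(1) a(1)] b a y by metis
        then show False using x a b by simp
      qed
      then show "u x * x y = 0" by simp
    qed
    finally have "u v * v y = 0" using s0 by simp
    then show "u v = 0" using y by simp
  qed
  have rank: "q_rank TYPE('k) n m r \<sigma> l = card M * card N"
  proof -
    have "q_rank TYPE('k) n m r \<sigma> l = V.dim C" unfolding q_rank_def C_def by simp
    also have "\<dots> = V.dim (V.span C)" by simp
    also have "V.span C = V.span (C - {0})" by (rule V.span_delete_0[symmetric])
    also have "V.dim (V.span (C - {0})) = V.dim (C - {0})" by (rule V.dim_span)
    also have "\<dots> = card (q ` (M \<times> N))" unfolding C0 by (rule V.dim_eq_card_independent[OF indep])
    also have "\<dots> = card (M \<times> N)" by (rule card_image[OF inj])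
    finally show ?thesis by (simp add: card_cartesian_product)
  qed
  have cM: "int (card M) = binom_int (int (n + l - 1)) (int l)"
    unfolding M_def multi_idx_card binom_int_nat by (simp add: add.commute)
  define h where "h k = (-1) ^ (k + 1) * binom_int (int m - int k * int n) (int l - (int k - 1) * int n)" for k :: nat
  have finX: "finite (X j)" for j using finR unfolding X_def by simp
  have "int (card N) = (\<Sum>B | B \<subseteq> {1..r} \<and> B \<noteq> {}. (- 1) ^ (card B + 1) * int (card (\<Inter> (X ` B))))"
    unfolding N_def by (rule int_card_UN_idx) (auto simp: finX)
  also have "\<dots> = (\<Sum>B | B \<subseteq> {1..r} \<and> B \<noteq> {}. h (card B))"
  proof (rule sum.cong[OF refl])
    fix B assume "B \<in> {B. B \<subseteq> {1..r} \<and> B \<noteq> {}}"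
    then have B: "B \<subseteq> {1..r}" "B \<noteq> {}" by auto
    have fB: "finite B" using B finite_subset by blast
    define U where "U = \<Union>(\<sigma> ` B)"
    have Ueq: "\<Inter> (X ` B) = {\<rho>. \<rho> \<subseteq> {1..m} \<and> card \<rho> = n + l \<and> U \<subseteq> \<rho>}"
      using B unfolding X_def R_def U_def by auto
    have sj: "\<sigma> j \<subseteq> {1..m} \<and> card (\<sigma> j) = n" if "j \<in> B" for j using assms(2) B that by blast
    have Usub: "U \<subseteq> {1..m}" unfolding U_def using sj by blast
    have cU: "card U = card B * n"
    proof -
      have "card U = (\<Sum>j\<in>B. card (\<sigma> j))" unfolding U_def
      proof (rule card_UN_disjoint[OF fB])
        show "\<forall>j\<in>B. finite (\<sigma> j)" using sj finite_subset by (meson finite_atLeastAtMost)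
        show "\<forall>i\<in>B. \<forall>j\<in>B. i \<noteq> j \<longrightarrow> \<sigma> i \<inter> \<sigma> j = {}" using assms(3) B by blast
      qed
      also have "\<dots> = (\<Sum>j\<in>B. n)" using sj by simp
      finally show ?thesis by simp
    qed
    have k1: "1 \<le> card B" using B fB by (simp add: Suc_leI card_gt_0_iff)
    have km: "card B * n \<le> m" using cU card_mono[OF _ Usub] by simp
    have "int (card (\<Inter> (X ` B))) = int (if card B * n \<le> n + l then (m - card B * n) choose (n + l - card B * n) else 0)"
    proof -
      have sc: "card {\<rho>. \<rho> \<subseteq> {1..m} \<and> card \<rho> = n + l \<and> U \<subseteq> \<rho>} =
        (if card U \<le> n + l then (card {1..m} - card U) choose (n + l - card U) else 0)"
        by (rule superset_card) (simp, rule Usub)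
      show ?thesis unfolding Ueq sc cU by simp
    qed
    also have "\<dots> = binom_int (int m - int (card B) * int n) (int l - (int (card B) - 1) * int n)"
      by (rule binom_conv[OF k1 km])
    finally show "(- 1) ^ (card B + 1) * int (card (\<Inter> (X ` B))) = h (card B)" by (simp add: h_def)
  qed
  also have "\<dots> = (\<Sum>i=1..r. int (r choose i) * h i)" by (rule regroup)
  finally have cN: "int (card N) = (\<Sum>i=1..r. int (r choose i) * h i)" .
  have "int (q_rank TYPE('k) n m r \<sigma> l) = int (card M) * int (card N)" by (simp add: rank)
  also have "\<dots> = binom_int (int (n + l - 1)) (int l) * (\<Sum>i=1..r. int (r choose i) * h i)"
    using cM cN by simp
  also have "(\<Sum>i=1..r. int (r choose i) * h i) = (\<Sum>i=1..r. (-1) ^ (i + 1) * int (r choose i) *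
        binom_int (int m - int i * int n) (int l - (int i - 1) * int n))"
    by (rule sum.cong) (simp_all add: h_def algebra_simps)
  finally show ?thesis .
qed

end
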